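(* Let $\Gamma=(V,\nu,\mu)$ be a fuzzy graph on $n\ge2$ vertices. Then $$\sigma^*(\Gamma)\le\frac{2\,\mathrm{ew}(\Gamma)^2}{n}\left(1-\frac2n\right),$$ with equality if and only if $\Gamma$ has exactly one positive fuzzy edge, with membership value $\mathrm{ew}(\Gamma)$, and all other memberships zero; that is, there are distinct vertices $u,v$ with $\mu(u,v)=\mathrm{ew}(\Gamma)$ and $\mu(x,y)=0$ for all other pairs $\{x,y\}\ne\{u,v\}$, so that the degree sequence is $\mathrm{ew}(\Gamma),\mathrm{ew}(\Gamma),0,\dots,0$ (with $n-2$ zeros).
   Context: A fuzzy graph $\Gamma=(V,\nu,\mu)$ consists of a finite vertex set $V$ with $|V|=n$, a map $\nu:V\to[0,1]$, and a symmetric map $\mu:V\times V\to[0,1]$ with $\mu(u,v)\le\min(\nu(u),\nu(v))$. The fuzzy degree is $d_\Gamma(v)=\sum_{u\ne v}\mu(v,u)$, the fuzzy size is $\mathrm{ew}(\Gamma)=\sum_{\{u,v\},u\ne v}\mu(u,v)$, $\lambda=2\,\mathrm{ew}(\Gamma)/n$, and the fuzzy sigma index is $\sigma^*(\Gamma)=\frac1n\sum_{v}(d_\Gamma(v)-\lambda)^2$. *)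

theory Defs
  imports Main Complex_Main
begin

definition fuzzy_graph :: "'a set \<Rightarrow> ('a \<Rightarrow> real) \<Rightarrow> ('a \<Rightarrow> 'a \<Rightarrow> real) \<Rightarrow> bool" where
  "fuzzy_graph V \<nu> \<mu> \<longleftrightarrow> finite V \<and>
     (\<forall>v\<in>V. 0 \<le> \<nu> v \<and> \<nu> v \<le> 1) \<and>
     (\<forall>u\<in>V. \<forall>v\<in>V. 0 \<le> \<mu> u v \<and> \<mu> u v \<le> 1 \<and> \<mu> u v = \<mu> v u \<and>
                     \<mu> u v \<le> min (\<nu> u) (\<nu> v))"

definition fdeg :: "'a set \<Rightarrow> ('a \<Rightarrow> 'a \<Rightarrow> real) \<Rightarrow> 'a \<Rightarrow> real" where
  "fdeg V \<mu> v = (\<Sum>u\<in>V - {v}. \<mu> v u)"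

definition upairs :: "'a set \<Rightarrow> 'a set set" where
  "upairs V = {{u, v} | u v. u \<in> V \<and> v \<in> V \<and> u \<noteq> v}"

text \<open>Fuzzy size: sum of mu over unordered pairs {u,v}, u \<noteq> v
(the value of mu on a pair is well-defined by symmetry).\<close>
definition fsize :: "'a set \<Rightarrow> ('a \<Rightarrow> 'a \<Rightarrow> real) \<Rightarrow> real" where
  "fsize V \<mu> = (\<Sum>e\<in>upairs V. (THE w. \<exists>u v. e = {u, v} \<and> u \<noteq> v \<and> w = \<mu> u v))"

definition flambda :: "'a set \<Rightarrow> ('a \<Rightarrow> 'a \<Rightarrow> real) \<Rightarrow> real" where
  "flambda V \<mu> = 2 * fsize V \<mu> / real (card V)"

definition fsigma :: "'a set \<Rightarrow> ('a \<Rightarrow> 'a \<Rightarrow> real) \<Rightarrow> real" where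
  "fsigma V \<mu> = (\<Sum>v\<in>V. (fdeg V \<mu> v - flambda V \<mu>)^2) / real (card V)"

end

theory Submission
  imports Defs
begin

lemma fsize_eq:
  assumes fg: "fuzzy_graph V \<nu> \<mu>"
  shows "2 * fsize V \<mu> = (\<Sum>v\<in>V. fdeg V \<mu> v)"
proof -
  have fin: "finite V" and sym: "\<And>u v. u \<in> V \<Longrightarrow> v \<in> V \<Longrightarrow> \<mu> u v = \<mu> v u"
    using fg unfolding fuzzy_graph_def by auto
  define P where "P = Sigma V (\<lambda>v. V - {v})"
  have finP: "finite P" unfolding P_def using fin by auto
  have finU: "finite (upairs V)"
  proof -
    have "upairs V \<subseteq> Pow V" unfolding upairs_def by auto
    thus ?thesis using fin by (meson finite_Pow_iff finite_subset)
  qed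
  have 1: "(\<Sum>v\<in>V. fdeg V \<mu> v) = (\<Sum>p\<in>P. \<mu> (fst p) (snd p))"
    unfolding fdeg_def P_def using fin
    by (subst sum.Sigma) (auto simp: case_prod_beta)
  define f where "f = (\<lambda>p::'a\<times>'a. {fst p, snd p})"
  have img: "f ` P \<subseteq> upairs V" unfolding f_def P_def upairs_def by fastforce
  have 2: "(\<Sum>p\<in>P. \<mu> (fst p) (snd p)) =
     (\<Sum>e\<in>upairs V. (\<Sum>p\<in>{p\<in>P. f p = e}. \<mu> (fst p) (snd p)))"
    using sum.group[OF finP finU img, of "\<lambda>p. \<mu> (fst p) (snd p)"] by simp
  have 3: "(\<Sum>p\<in>{p\<in>P. f p = e}. \<mu> (fst p) (snd p)) =
      2 * (THE w. \<exists>u v. e = {u, v} \<and> u \<noteq> v \<and> w = \<mu> u v)" if e: "e \<in> upairs V" for e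
  proof -
    obtain a b where ab: "e = {a,b}" "a \<in> V" "b \<in> V" "a \<noteq> b"
      using e unfolding upairs_def by auto
    have "{p\<in>P. f p = e} = {(a,b),(b,a)}"
      unfolding P_def f_def ab(1) using ab by (auto simp: doubleton_eq_iff)
    hence s: "(\<Sum>p\<in>{p\<in>P. f p = e}. \<mu> (fst p) (snd p)) = 2 * \<mu> a b"
      using ab sym[of a b] by simp
    have "(THE w. \<exists>u v. e = {u, v} \<and> u \<noteq> v \<and> w = \<mu> u v) = \<mu> a b"
    proof (rule the_equality)
      show "\<exists>u v. e = {u, v} \<and> u \<noteq> v \<and> \<mu> a b = \<mu> u v" using ab by auto
    next
      fix w assume "\<exists>u v. e = {u, v} \<and> u \<noteq> v \<and> w = \<mu> u v"
      then obtain u v where "e = {u,v}" "w = \<mu> u v" by auto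
      then show "w = \<mu> a b" using ab sym[of a b] by (auto simp: doubleton_eq_iff)
    qed
    thus ?thesis using s by simp
  qed
  show ?thesis unfolding fsize_def 1 2 using 3
    by (simp add: sum_distrib_left)
qed


theorem theorem3p2:
  fixes V :: "'a set" and \<nu> :: "'a \<Rightarrow> real" and \<mu> :: "'a \<Rightarrow> 'a \<Rightarrow> real" and n :: nat
  assumes "fuzzy_graph V \<nu> \<mu>" and "card V = n" and "n \<ge> 2"
  shows "fsigma V \<mu> \<le> 2 * (fsize V \<mu>)^2 / real n * (1 - 2 / real n) \<and>
         (fsigma V \<mu> = 2 * (fsize V \<mu>)^2 / real n * (1 - 2 / real n) \<longleftrightarrow>
         (\<exists>u\<in>V. \<exists>v\<in>V. u \<noteq> v \<and> \<mu> u v = fsize V \<mu> \<and>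
            (\<forall>x\<in>V. \<forall>y\<in>V. x \<noteq> y \<and> {x, y} \<noteq> {u, v} \<longrightarrow> \<mu> x y = 0)))"
proof -
  have fin: "finite V" and sym: "\<And>u v. u \<in> V \<Longrightarrow> v \<in> V \<Longrightarrow> \<mu> u v = \<mu> v u"
    and nn: "\<And>u v. u \<in> V \<Longrightarrow> v \<in> V \<Longrightarrow> 0 \<le> \<mu> u v"
    using assms(1) unfolding fuzzy_graph_def by auto
  define d where "d = fdeg V \<mu>"
  define D where "D = (\<Sum>v\<in>V. d v)"
  define m where "m = fsize V \<mu>"
  have Dm: "D = 2 * m" unfolding D_def d_def m_def using fsize_eq[OF assms(1)] by simp
  have dv: "d v = (\<Sum>u\<in>V - {v}. \<mu> v u)" for v unfolding d_def fdeg_def by simp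
  have dnn: "0 \<le> d v" if "v \<in> V" for v unfolding dv using nn that by (intro sum_nonneg) auto
  have Dge: "d v + d u \<le> D" if "v \<in> V" "u \<in> V" "u \<noteq> v" for u v
  proof -
    have "(\<Sum>x\<in>{v,u}. d x) \<le> D" unfolding D_def
      using that fin dnn by (intro sum_mono2) auto
    thus ?thesis using that by simp
  qed
  define Q where "Q = (\<Sum>v\<in>V. \<Sum>u\<in>V - {v}. \<mu> v u * (D - d v - d u))"
  have Qnn: "0 \<le> Q" unfolding Q_def
    using nn Dge by (intro sum_nonneg mult_nonneg_nonneg) (auto simp: algebra_simps)
  have swap: "(\<Sum>v\<in>V. \<Sum>u\<in>V - {v}. \<mu> v u * d u) = (\<Sum>u\<in>V. d u * d u)"
  proof -
    have "(\<Sum>v\<in>V. \<Sum>u\<in>V - {v}. \<mu> v u * d u) = (\<Sum>v\<in>V. \<Sum>u\<in>{u\<in>V. v \<noteq> u}. \<mu> v u * d u)"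
      by (intro sum.cong) auto
    also have "\<dots> = (\<Sum>u\<in>V. \<Sum>v\<in>{v\<in>V. v \<noteq> u}. \<mu> v u * d u)"
      by (rule sum.swap_restrict[OF fin fin])
    also have "\<dots> = (\<Sum>u\<in>V. d u * d u)"
      unfolding dv sum_distrib_right
      by (intro sum.cong refl) (auto simp: sym)
    finally show ?thesis .
  qed
  have QD: "D * D = 2 * (\<Sum>v\<in>V. d v * d v) + Q"
  proof -
    have "Q = (\<Sum>v\<in>V. \<Sum>u\<in>V - {v}. \<mu> v u * D) - (\<Sum>v\<in>V. \<Sum>u\<in>V - {v}. \<mu> v u * d v)
              - (\<Sum>v\<in>V. \<Sum>u\<in>V - {v}. \<mu> v u * d u)"
      unfolding Q_def by (simp add: algebra_simps sum_subtractf sum.distrib)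
    also have "(\<Sum>v\<in>V. \<Sum>u\<in>V - {v}. \<mu> v u * D) = D * D"
    proof -
      have e: "(\<Sum>v\<in>V. \<Sum>u\<in>V - {v}. \<mu> v u) = D" unfolding D_def dv by simp
      show ?thesis unfolding sum_distrib_right[symmetric] e ..
    qed
    also have "(\<Sum>v\<in>V. \<Sum>u\<in>V - {v}. \<mu> v u * d v) = (\<Sum>v\<in>V. d v * d v)"
      unfolding dv by (simp add: sum_distrib_right)
    finally show ?thesis using swap by simp
  qed
  have npos: "real n > 0" using assms(3) by simp
  have cardV: "real (card V) = real n" using assms(2) by simp
  have sig: "fsigma V \<mu> = ((\<Sum>v\<in>V. d v * d v) - D * D / real n) / real n"
  proof -
    have "(\<Sum>v\<in>V. (d v - D / real n)^2) =
          (\<Sum>v\<in>V. d v * d v) - 2 * (D / real n) * D + real n * (D / real n)^2"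
    proof -
      define c where "c = D / real n"
      have "(\<Sum>v\<in>V. (d v - c)^2) = (\<Sum>v\<in>V. d v * d v - (2 * c) * d v + c^2)"
        by (intro sum.cong refl) (simp add: power2_eq_square algebra_simps)
      also have "\<dots> = (\<Sum>v\<in>V. d v * d v) - (2 * c) * (\<Sum>v\<in>V. d v) + real n * c^2"
        by (simp add: sum.distrib sum_subtractf sum_distrib_left[symmetric] assms(2))
      finally show ?thesis unfolding c_def D_def .
    qed
    also have "\<dots> = (\<Sum>v\<in>V. d v * d v) - D * D / real n"
      using npos by (simp add: field_simps power2_eq_square)
    finally show ?thesis
      unfolding fsigma_def flambda_def cardV d_def[symmetric] m_def[symmetric]
      using Dm by simp
  qed
  have T: "2 * (fsize V \<mu>)^2 / real n * (1 - 2 / real n) - fsigma V \<mu> = Q / (2 * real n)"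
  proof -
    have Qe: "Q = 4*m*m - 2 * (\<Sum>v\<in>V. d v * d v)" using QD Dm by simp
    show ?thesis unfolding sig m_def[symmetric] Qe Dm using npos
      by (simp add: field_simps power2_eq_square)
  qed
  have part1: "fsigma V \<mu> \<le> 2 * (fsize V \<mu>)^2 / real n * (1 - 2 / real n)"
    using T Qnn npos by (smt (verit) divide_nonneg_pos)
  have eqQ: "(fsigma V \<mu> = 2 * (fsize V \<mu>)^2 / real n * (1 - 2 / real n)) \<longleftrightarrow> Q = 0"
    using T npos by auto
  have Qiff: "Q = 0 \<longleftrightarrow> (\<forall>v\<in>V. \<forall>u\<in>V - {v}. \<mu> v u * (D - d v - d u) = 0)"
  proof -
    have tnn: "0 \<le> \<mu> v u * (D - d v - d u)" if "v \<in> V" "u \<in> V - {v}" for v u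
      using nn Dge that by (intro mult_nonneg_nonneg) (auto simp: algebra_simps)
    have inn: "0 \<le> (\<Sum>u\<in>V - {v}. \<mu> v u * (D - d v - d u))" if "v \<in> V" for v
      using tnn that by (intro sum_nonneg) auto
    have "Q = 0 \<longleftrightarrow> (\<forall>v\<in>V. (\<Sum>u\<in>V - {v}. \<mu> v u * (D - d v - d u)) = 0)"
      unfolding Q_def using fin inn by (simp add: sum_nonneg_eq_0_iff)
    also have "\<dots> \<longleftrightarrow> (\<forall>v\<in>V. \<forall>u\<in>V - {v}. \<mu> v u * (D - d v - d u) = 0)"
    proof (intro ball_cong refl)
      fix v assume "v \<in> V"
      then show "((\<Sum>u\<in>V - {v}. \<mu> v u * (D - d v - d u)) = 0) \<longleftrightarrow>
          (\<forall>u\<in>V - {v}. \<mu> v u * (D - d v - d u) = 0)"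
        using fin tnn by (intro sum_nonneg_eq_0_iff) auto
    qed
    finally show ?thesis .
  qed
  have dz: "\<And>x. x \<in> V \<Longrightarrow> d x = 0 \<Longrightarrow> (\<forall>y\<in>V. y \<noteq> x \<longrightarrow> \<mu> x y = 0)"
  proof (intro ballI impI)
    fix x y assume x: "x \<in> V" "d x = 0" and y: "y \<in> V" "y \<noteq> x"
    have "\<forall>u\<in>V - {x}. \<mu> x u = 0"
      using x fin nn by (subst sum_nonneg_eq_0_iff[symmetric]) (auto simp: dv)
    thus "\<mu> x y = 0" using y by auto
  qed
  have main: "(\<forall>v\<in>V. \<forall>u\<in>V - {v}. \<mu> v u * (D - d v - d u) = 0) \<longleftrightarrow>
         (\<exists>u\<in>V. \<exists>v\<in>V. u \<noteq> v \<and> \<mu> u v = m \<and>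
            (\<forall>x\<in>V. \<forall>y\<in>V. x \<noteq> y \<and> {x, y} \<noteq> {u, v} \<longrightarrow> \<mu> x y = 0))"
  proof
    assume H: "\<forall>v\<in>V. \<forall>u\<in>V - {v}. \<mu> v u * (D - d v - d u) = 0"
    show "\<exists>u\<in>V. \<exists>v\<in>V. u \<noteq> v \<and> \<mu> u v = m \<and>
            (\<forall>x\<in>V. \<forall>y\<in>V. x \<noteq> y \<and> {x, y} \<noteq> {u, v} \<longrightarrow> \<mu> x y = 0)"
    proof (cases "\<forall>x\<in>V. \<forall>y\<in>V. x \<noteq> y \<longrightarrow> \<mu> x y = 0")
      case True
      have "d x = 0" if "x \<in> V" for x unfolding dv using True that by (intro sum.neutral) auto
      hence "D = 0" unfolding D_def by simp
      hence m0: "m = 0" using Dm by simp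
      have "card V \<ge> 2" using assms by simp
      then obtain a b where "a \<in> V" "b \<in> V" "a \<noteq> b"
        using card_le_Suc0_iff_eq[OF fin] by (metis not_less_eq_eq numeral_2_eq_2)
      thus ?thesis using True m0 by metis
    next
      case False
      then obtain a b where ab: "a \<in> V" "b \<in> V" "a \<noteq> b" "\<mu> a b \<noteq> 0" by auto
      have "\<mu> a b * (D - d a - d b) = 0" using H ab by auto
      hence Dab: "D = d a + d b" using ab(4) by simp
      have dx0: "d x = 0" if x: "x \<in> V" "x \<noteq> a" "x \<noteq> b" for x
      proof -
        have "(\<Sum>y\<in>{a,b,x}. d y) \<le> D" unfolding D_def
          using x ab fin dnn by (intro sum_mono2) auto
        thus ?thesis using x ab Dab dnn[OF x(1)] by simp
      qed
      have z: "\<mu> x y = 0" if "x \<in> V" "y \<in> V" "x \<noteq> y" "x \<notin> {a,b} \<or> y \<notin> {a,b}" for x y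
        using that dz dx0 sym by (metis insertCI)
      have da: "d a = \<mu> a b"
      proof -
        have "d a = \<mu> a b + (\<Sum>u\<in>V - {a} - {b}. \<mu> a u)"
          unfolding dv using ab fin by (subst sum.remove[of _ b]) auto
        also have "(\<Sum>u\<in>V - {a} - {b}. \<mu> a u) = 0" using z ab by (intro sum.neutral) auto
        finally show ?thesis by simp
      qed
      have db: "d b = \<mu> a b"
      proof -
        have "d b = \<mu> b a + (\<Sum>u\<in>V - {b} - {a}. \<mu> b u)"
          unfolding dv using ab fin by (subst sum.remove[of _ a]) auto
        also have "(\<Sum>u\<in>V - {b} - {a}. \<mu> b u) = 0" using z ab by (intro sum.neutral) auto
        finally show ?thesis using sym ab by simp
      qed
      have "\<mu> a b = m" using Dab Dm da db by simp
      moreover have "\<forall>x\<in>V. \<forall>y\<in>V. x \<noteq> y \<and> {x, y} \<noteq> {a, b} \<longrightarrow> \<mu> x y = 0"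
      proof (intro ballI impI)
        fix x y assume xy: "x \<in> V" "y \<in> V" "x \<noteq> y \<and> {x, y} \<noteq> {a, b}"
        have "x \<notin> {a,b} \<or> y \<notin> {a,b}"
        proof (rule ccontr)
          assume "\<not> (x \<notin> {a,b} \<or> y \<notin> {a,b})"
          hence "x \<in> {a,b}" "y \<in> {a,b}" by auto
          thus False using xy(3) by auto
        qed
        thus "\<mu> x y = 0" using z xy by blast
      qed
      ultimately show ?thesis using ab by blast
    qed
  next
    assume "\<exists>u\<in>V. \<exists>v\<in>V. u \<noteq> v \<and> \<mu> u v = m \<and>
            (\<forall>x\<in>V. \<forall>y\<in>V. x \<noteq> y \<and> {x, y} \<noteq> {u, v} \<longrightarrow> \<mu> x y = 0)"
    then obtain a b where ab: "a \<in> V" "b \<in> V" "a \<noteq> b"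
      and z: "\<forall>x\<in>V. \<forall>y\<in>V. x \<noteq> y \<and> {x, y} \<noteq> {a, b} \<longrightarrow> \<mu> x y = 0" by blast
    have dx0: "d x = 0" if "x \<in> V" "x \<noteq> a" "x \<noteq> b" for x
      unfolding dv using z that by (intro sum.neutral) (auto simp: doubleton_eq_iff)
    have "D = d a + d b + (\<Sum>x\<in>V - {a} - {b}. d x)"
      unfolding D_def using ab fin
      by (simp add: sum.remove[of V a] sum.remove[of "V - {a}" b])
    also have "(\<Sum>x\<in>V - {a} - {b}. d x) = 0" using dx0 by (intro sum.neutral) auto
    finally have Dab: "D = d a + d b" by simp
    show "\<forall>v\<in>V. \<forall>u\<in>V - {v}. \<mu> v u * (D - d v - d u) = 0"
    proof (intro ballI)
      fix v u assume v: "v \<in> V" and u: "u \<in> V - {v}"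
      show "\<mu> v u * (D - d v - d u) = 0"
      proof (cases "{v,u} = {a,b}")
        case True thus ?thesis using Dab by (auto simp: doubleton_eq_iff)
      next
        case False
        have "\<mu> v u = 0" using z[rule_format, of v u] v u False by auto
        thus ?thesis by simp
      qed
    qed
  qed
  show ?thesis by (intro conjI part1 trans[OF eqQ trans[OF Qiff main[unfolded m_def]]])
qed

end
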